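(* Let $0<p<\infty$, $0<\alpha<\infty$, and let $\beta$ be real with $\beta p<-1$ and $\nu:=-(\alpha+\beta+\frac1p)>0$. Let $K>1$ be sufficiently large, $\delta_n=K^{-n}$, $f_n(z)=\delta_n^\nu(1+\delta_n-z)^\beta$ ($z\in\mathbb{D}$), and $X_{\nu,\beta}=\{\sum_{n=1}^\infty a_nf_n:(a_n)\in\ell_\infty\}$. Then the map $\Phi:\ell_\infty\to X_{\nu,\beta}$, $\Phi((a_n))=\sum_{n=1}^\infty a_nf_n$, is an isomorphism between $\ell_\infty$ and $X_{\nu,\beta}$ endowed with the norm of $H(p,\infty,\alpha)$; that is, $X_{\nu,\beta}\subseteq H(p,\infty,\alpha)$, $\Phi$ is a linear bijection, and there are constants $c,C>0$ with $c\|{\bf a}\|_{\ell_\infty}\le\|\Phi{\bf a}\|_{p,\infty,\alpha}\le C\|{\bf a}\|_{\ell_\infty}$ for all ${\bf a}\in\ell_\infty$.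
   Context: $\mathbb{D}$ is the unit disk; powers use the principal branch. The series converges uniformly on compact subsets of $\mathbb{D}$. $M_p(r,f)=\left(\int_0^{2\pi}|f(re^{i\theta})|^p\frac{d\theta}{2\pi}\right)^{1/p}$; $H(p,\infty,\alpha)$ is the space of analytic $f$ on $\mathbb{D}$ with $\|f\|_{p,\infty,\alpha}=\sup_{0\le r<1}(1-r)^\alpha M_p(r,f)<\infty$. *)

theory Defs
  imports "HOL-Analysis.Analysis"
begin

definition Mp :: "real \<Rightarrow> real \<Rightarrow> (complex \<Rightarrow> complex) \<Rightarrow> real" where
  "Mp p r f = ((LINT \<theta>:{0..2*pi}|lborel. norm (f (complex_of_real r * cis \<theta>)) powr p) / (2*pi)) powr (1/p)"

definition in_Hpia :: "real \<Rightarrow> real \<Rightarrow> (complex \<Rightarrow> complex) \<Rightarrow> bool" where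
  "in_Hpia p \<alpha> f \<longleftrightarrow> f analytic_on ball 0 1 \<and>
     bdd_above ((\<lambda>r. (1 - r) powr \<alpha> * Mp p r f) ` {0..<1})"

text \<open>The norm of H(p,infinity,alpha) (meaningful for f with in_Hpia p alpha f).\<close>
definition Hpia_norm :: "real \<Rightarrow> real \<Rightarrow> (complex \<Rightarrow> complex) \<Rightarrow> real" where
  "Hpia_norm p \<alpha> f = (SUP r\<in>{0..<1}. (1 - r) powr \<alpha> * Mp p r f)"

definition linf_norm :: "(nat \<Rightarrow> complex) \<Rightarrow> real" where
  "linf_norm a = (SUP n. norm (a n))"

definition fK :: "real \<Rightarrow> real \<Rightarrow> real \<Rightarrow> nat \<Rightarrow> complex \<Rightarrow> complex" where
  "fK K \<nu> \<beta> n z = complex_of_real ((K powr (- real n)) powr \<nu>) *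
      (complex_of_real (1 + K powr (- real n)) - z) powr complex_of_real \<beta>"

text \<open>Phi(a) = sum_{n>=1} a_n f_n; the sequence a is indexed from 0, a k standing for a_{k+1}.\<close>
definition PhiK :: "real \<Rightarrow> real \<Rightarrow> real \<Rightarrow> (nat \<Rightarrow> complex) \<Rightarrow> complex \<Rightarrow> complex" where
  "PhiK K \<nu> \<beta> a z = (\<Sum>k. a k * fK K \<nu> \<beta> (Suc k) z)"

end

theory Submission
  imports Defs "HOL-Complex_Analysis.Cauchy_Integral_Formula"
begin

lemma cos_lb: fixes x::real assumes "0 \<le> x" shows "1 - x^2/2 \<le> cos x"
proof -
  have "(\<lambda>x. cos x - 1 + x^2/2) 0 \<le> (\<lambda>x. cos x - 1 + x^2/2) x"
  proof (rule DERIV_nonneg_imp_nondecreasing[OF assms])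
    fix y assume "0 \<le> y" "y \<le> x"
    show "\<exists>d. ((\<lambda>x. cos x - 1 + x^2/2) has_real_derivative d) (at y) \<and> 0 \<le> d"
      by (rule exI[of _ "y - sin y"]) (auto intro!: derivative_eq_intros sin_x_le_x \<open>0\<le>y\<close>)
  qed
  thus ?thesis by simp
qed

lemma sin_lb: fixes x::real assumes "0 \<le> x" shows "x - x^3/6 \<le> sin x"
proof -
  have "(\<lambda>x. sin x - x + x^3/6) 0 \<le> (\<lambda>x. sin x - x + x^3/6) x"
  proof (rule DERIV_nonneg_imp_nondecreasing[OF assms])
    fix y assume "0 \<le> y" "y \<le> x"
    show "\<exists>d. ((\<lambda>x. sin x - x + x^3/6) has_real_derivative d) (at y) \<and> 0 \<le> d"
      using cos_lb[OF \<open>0\<le>y\<close>]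
      by (intro exI[of _ "cos y - 1 + y^2/2"]) (auto intro!: derivative_eq_intros)
  qed
  thus ?thesis by simp
qed

lemma one_minus_cos_lb: fixes x::real assumes "0 \<le> x" "x \<le> pi" shows "x^2/8 \<le> 1 - cos x"
proof -
  have "pi \<le> 3.2" using pi_approx(2) by simp
  hence x4: "x \<le> 3.2" using assms by linarith
  have "x/2 - (x/2)^3/6 \<le> sin (x/2)" using sin_lb[of "x/2"] assms by simp
  moreover have "x/4 \<le> x/2 - (x/2)^3/6"
  proof -
    have "x^2 \<le> 3.2^2" using x4 assms(1) by (intro power_mono) auto
    hence "x^2 \<le> 12" by (simp add: power2_eq_square)
    hence "x * x^2 \<le> x * 12" using assms(1) by (intro mult_left_mono) auto
    thus ?thesis by (simp add: power3_eq_cube power2_eq_square field_simps)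
  qed
  ultimately have s: "x/4 \<le> sin (x/2)" by linarith
  have "(x/4)^2 \<le> sin (x/2) ^ 2" using s assms(1) by (intro power_mono) auto
  moreover have "cos x = 1 - 2 * sin (x/2)^2" using cos_double_sin[of "x/2"] by simp
  ultimately show ?thesis by (simp add: power2_eq_square)
qed

lemma geo_lb:
  fixes r d \<theta> :: real
  assumes "0 \<le> r" "r < 1" "0 < d" "d \<le> 1" "0 \<le> \<theta>" "\<theta> \<le> 2*pi"
  shows "(d + (1 - r) + min \<theta> (2*pi - \<theta>)) / 12 \<le> cmod (complex_of_real (1 + d) - complex_of_real r * cis \<theta>)"
proof -
  define w where "w = complex_of_real (1 + d) - complex_of_real r * cis \<theta>"
  define \<phi> where "\<phi> = min \<theta> (2*pi - \<theta>)"
  define s where "s = 1 + d - r"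
  have phi: "0 \<le> \<phi>" "\<phi> \<le> pi" using assms unfolding \<phi>_def by auto
  have cphi: "cos \<theta> = cos \<phi>" unfolding \<phi>_def by (cases "\<theta> \<le> 2*pi - \<theta>") (auto simp: min_def)
  have Rew: "Re w = 1 + d - r * cos \<theta>" and Imw: "Im w = - r * sin \<theta>" by (auto simp: w_def)
  have sq: "(cmod w)^2 = s^2 + 2*(1+d)*r*(1 - cos \<phi>)"
  proof -
    have "(cmod w)^2 = (1+d)^2 - 2*(1+d)*r*cos \<theta> + r^2 * ((sin \<theta>)^2 + (cos \<theta>)^2)"
      unfolding cmod_power2 Rew Imw by (simp only: power2_eq_square algebra_simps)
    also have "\<dots> = s^2 + 2*(1+d)*r*(1 - cos \<phi>)" unfolding cphi[symmetric] s_def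
      by (simp add: power2_eq_square algebra_simps)
    finally show ?thesis .
  qed
  show ?thesis
  proof (cases "r < 1/2")
    case True
    have "Re w \<le> cmod w" by (rule complex_Re_le_cmod)
    moreover have "1 + d - r \<le> Re w" using Rew assms cos_le_one[of \<theta>]
      by (smt (verit) mult_left_le)
    moreover have "d + (1 - r) + \<phi> \<le> 6" using phi assms pi_less_4 by linarith
    hence "(d + (1 - r) + \<phi>)/12 \<le> 1/2" by (simp add: field_simps)
    ultimately show ?thesis using True assms unfolding w_def[symmetric] \<phi>_def[symmetric] by linarith
  next
    case False
    have c: "\<phi>^2/8 \<le> 1 - cos \<phi>" using one_minus_cos_lb phi by auto
    have "2*(1+d)*r \<ge> 2*1*r" using assms by (intro mult_right_mono mult_left_mono) auto
    hence h1: "2*(1+d)*r \<ge> 1" using False by linarith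
    have "0 \<le> 1 - cos \<phi>" by simp
    from mult_right_mono[OF h1 this] have "2*(1+d)*r*(1 - cos \<phi>) \<ge> 1 - cos \<phi>" by simp
    hence "(cmod w)^2 \<ge> s^2 + \<phi>^2/8" using sq c by linarith
    moreover have "((s + \<phi>)/4)^2 \<le> s^2 + \<phi>^2/8"
    proof -
      have "(s + \<phi>)^2 \<le> 2 * s^2 + 2 * \<phi>^2" using zero_le_power2[of "s-\<phi>"]
        by (simp add: power2_eq_square algebra_simps)
      moreover have "((s + \<phi>)/4)^2 = (s + \<phi>)^2 / 16" by (simp add: power_divide)
      moreover have "0 \<le> s^2" by simp
      ultimately show ?thesis by linarith
    qed
    ultimately have "((s + \<phi>)/4)^2 \<le> (cmod w)^2" by linarith
    hence "(s + \<phi>)/4 \<le> cmod w" by (rule power2_le_imp_le) simp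
    moreover have "0 \<le> s + \<phi>" using phi assms s_def by simp
    hence "(d + (1 - r) + \<phi>)/12 \<le> (s + \<phi>)/4" unfolding s_def by (simp add: field_simps)
    ultimately show ?thesis unfolding w_def[symmetric] \<phi>_def[symmetric] by linarith
  qed
qed

definition ee :: "real \<Rightarrow> nat \<Rightarrow> real" where "ee K k = K powr (-real (Suc k))"
definition hh :: "real \<Rightarrow> real \<Rightarrow> real \<Rightarrow> real \<Rightarrow> nat \<Rightarrow> real" where
  "hh K \<nu> \<beta> t k = ee K k powr \<nu> * (ee K k + t) powr \<beta>"

lemma ee_pos: "1 < K \<Longrightarrow> 0 < ee K k" by (simp add: ee_def)
lemma ee_le1: "1 < K \<Longrightarrow> ee K k \<le> 1"
  unfolding ee_def by (metis powr_mono of_nat_0_le_iff neg_le_0_iff_le powr_zero_eq_one less_imp_le not_one_less_zero order.strict_trans)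

lemma powr_pow_eq: "0 < K \<Longrightarrow> (K powr a) ^ j = K powr (a * real j)"
  by (metis powr_powr powr_realpow powr_gt_zero)

lemma ee_shift: assumes "1 < K" shows "ee K (j + N) = ee K N * K powr (- real j)"
  using assms unfolding ee_def by (simp add: powr_add[symmetric] algebra_simps)

lemma ee_Suc: assumes "1 < K" shows "ee K (Suc m) = ee K m / K"
  using ee_shift[OF assms, of 1 m] assms by (simp add: powr_minus divide_inverse)

lemma hh_nonneg: "0 \<le> hh K \<nu> \<beta> t k" by (simp add: hh_def)

lemma tail_bound:
  fixes K \<nu> \<beta> t \<rho> :: real and N :: nat
  assumes K: "1 < K" and nu: "0 < \<nu>" and be: "\<beta> < 0" and t: "0 < t" and rho: "0 < \<rho>"
    and eN: "ee K N \<le> \<rho> * t"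
  shows "summable (\<lambda>j. hh K \<nu> \<beta> t (j + N)) \<and>
         (\<Sum>j. hh K \<nu> \<beta> t (j + N)) \<le> \<rho> powr \<nu> * t powr (\<nu>+\<beta>) / (1 - K powr (-\<nu>))"
proof -
  define q where "q = K powr (-\<nu>)"
  have q: "0 < q" "q < 1" unfolding q_def using K nu
    by (auto intro!: powr_less_one)
  define B where "B = \<rho> powr \<nu> * t powr (\<nu>+\<beta>)"
  have bnd: "hh K \<nu> \<beta> t (j + N) \<le> B * q^j" for j
  proof -
    have e: "0 < ee K (j+N)" using ee_pos[OF K] .
    have "(ee K (j + N) + t) powr \<beta> \<le> t powr \<beta>"
      using e t be by (intro powr_mono2') auto
    moreover have "ee K (j + N) powr \<nu> \<le> (\<rho> * t) powr \<nu> * q^j"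
    proof -
      have "ee K (j + N) powr \<nu> = ee K N powr \<nu> * (K powr (- real j)) powr \<nu>"
        unfolding ee_shift[OF K] using ee_pos[OF K] by (simp add: powr_mult)
      also have "(K powr (- real j)) powr \<nu> = q^j"
        unfolding q_def using K by (simp add: powr_pow_eq powr_powr mult.commute)
      also have "ee K N powr \<nu> \<le> (\<rho> * t) powr \<nu>"
        using eN ee_pos[OF K, of N] nu by (intro powr_mono2) auto
      finally show ?thesis using q by (simp add: mult_right_mono)
    qed
    ultimately have "hh K \<nu> \<beta> t (j + N) \<le> (\<rho> * t) powr \<nu> * q^j * t powr \<beta>"
      unfolding hh_def using q by (intro mult_mono) auto
    also have "\<dots> = B * q^j" unfolding B_def using rho t
      by (simp add: powr_mult powr_add)
    finally show ?thesis .
  qed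
  have sg: "summable (\<lambda>j. B * q^j)" using q by (intro summable_mult summable_geometric) auto
  have s: "summable (\<lambda>j. hh K \<nu> \<beta> t (j + N))"
    by (rule summable_comparison_test'[OF sg, of 0]) (use bnd hh_nonneg in auto)
  have "(\<Sum>j. hh K \<nu> \<beta> t (j + N)) \<le> (\<Sum>j. B * q^j)"
    by (rule suminf_le[OF bnd s sg])
  also have "\<dots> = B / (1 - q)" using q by (simp add: suminf_mult suminf_geometric divide_inverse)
  finally show ?thesis using s unfolding B_def q_def by simp
qed

lemma head_bound:
  fixes K \<nu> \<beta> t la :: real and N :: nat
  assumes K: "1 < K" and nu: "0 < \<nu>" and be: "\<beta> < 0" and ga: "\<nu> + \<beta> < 0" and t: "0 < t"
    and la: "0 < la" and H: "\<And>k. k < N \<Longrightarrow> la * t * K^(N - Suc k) \<le> ee K k"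
  shows "(\<Sum>k<N. hh K \<nu> \<beta> t k) \<le> la powr (\<nu>+\<beta>) * t powr (\<nu>+\<beta>) / (1 - K powr (\<nu>+\<beta>))"
proof -
  define g where "g = \<nu> + \<beta>"
  define q where "q = K powr g"
  have q: "0 < q" "q < 1" unfolding q_def using K ga g_def
    by (auto intro!: powr_less_one)
  define B where "B = la powr g * t powr g"
  have bnd: "hh K \<nu> \<beta> t k \<le> B * q^(N - Suc k)" if k: "k < N" for k
  proof -
    have e: "0 < ee K k" using ee_pos[OF K] .
    have "(ee K k + t) powr \<beta> \<le> ee K k powr \<beta>"
      using e t be by (intro powr_mono2') auto
    hence "hh K \<nu> \<beta> t k \<le> ee K k powr \<nu> * ee K k powr \<beta>"
      unfolding hh_def by (intro mult_left_mono) auto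
    also have "\<dots> = ee K k powr g" unfolding g_def by (simp add: powr_add)
    also have "\<dots> \<le> (la * t * K^(N - Suc k)) powr g"
      using H[OF k] la t K ga g_def by (intro powr_mono2') auto
    also have "\<dots> = B * q^(N - Suc k)" unfolding B_def q_def using la t K
      by (simp add: powr_mult powr_pow_eq powr_powr mult.commute flip: powr_realpow)
    finally show ?thesis .
  qed
  have "(\<Sum>k<N. hh K \<nu> \<beta> t k) \<le> (\<Sum>k<N. B * q^(N - Suc k))"
    by (rule sum_mono) (use bnd in auto)
  also have "\<dots> = B * (\<Sum>i<N. q^i)"
    by (simp add: sum_distrib_left[symmetric] sum.nat_diff_reindex[where g="\<lambda>i. q^i"])
  also have "(\<Sum>i<N. q^i) \<le> 1 / (1 - q)"
    using q by (simp add: sum_gp_strict divide_right_mono)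
  hence "B * (\<Sum>i<N. q^i) \<le> B * (1 / (1 - q))" unfolding B_def by (intro mult_left_mono) auto
  finally show ?thesis unfolding B_def q_def g_def by simp
qed



lemma exists_N:
  assumes K: "1 < K" and t: "0 < t"
  shows "\<exists>N. ee K N \<le> t \<and> (\<forall>k<N. t < ee K k)"
proof -
  obtain n where n: "1/t < K^n" using real_arch_pow[OF K] by blast
  have K0: "0 < K" using K by simp
  have "ee K n = 1 / K^(Suc n)" unfolding ee_def powr_minus powr_realpow[OF K0]
    by (simp add: divide_inverse)
  also have "\<dots> \<le> 1 / K^n" using K by (intro divide_left_mono) auto
  also have "\<dots> < t" using n t K by (simp add: field_simps)
  finally have ex: "\<exists>n. ee K n \<le> t" by (intro exI[of _ n]) simp
  define N where "N = (LEAST n. ee K n \<le> t)"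
  have "ee K N \<le> t" unfolding N_def by (rule LeastI_ex[OF ex])
  moreover have "\<forall>k<N. t < ee K k" unfolding N_def using not_less_Least by force
  ultimately show ?thesis by blast
qed

lemma full_bound:
  fixes K \<nu> \<beta> t :: real
  assumes K: "1 < K" and nu: "0 < \<nu>" and be: "\<beta> < 0" and ga: "\<nu> + \<beta> < 0" and t: "0 < t"
  shows "summable (hh K \<nu> \<beta> t) \<and> suminf (hh K \<nu> \<beta> t) \<le>
     t powr (\<nu>+\<beta>) * (1 / (1 - K powr (-\<nu>)) + 1 / (1 - K powr (\<nu>+\<beta>)))"
proof -
  obtain N where N1: "ee K N \<le> t" and N2: "\<forall>k<N. t < ee K k" using exists_N[OF K t] by blast
  have T: "summable (\<lambda>j. hh K \<nu> \<beta> t (j + N)) \<and>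
         (\<Sum>j. hh K \<nu> \<beta> t (j + N)) \<le> 1 powr \<nu> * t powr (\<nu>+\<beta>) / (1 - K powr (-\<nu>))"
    by (rule tail_bound[OF K nu be t]) (use N1 in auto)
  have H: "(\<Sum>k<N. hh K \<nu> \<beta> t k) \<le> 1 powr (\<nu>+\<beta>) * t powr (\<nu>+\<beta>) / (1 - K powr (\<nu>+\<beta>))"
  proof (rule head_bound[OF K nu be ga t])
    fix k assume k: "k < N"
    have "ee K (N - 1) = ee K ((N - Suc k) + k)" using k by (intro arg_cong[where f="ee K"]) auto
    also have "\<dots> = ee K k * K powr (- real (N - Suc k))" by (rule ee_shift[OF K])
    finally have "ee K k = ee K (N - 1) * K^(N - Suc k)" using K
      by (simp add: powr_minus powr_realpow field_simps)
    moreover have "t < ee K (N - 1)" using N2 k by auto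
    ultimately show "1 * t * K ^ (N - Suc k) \<le> ee K k" using K by simp
  qed simp
  have s: "summable (hh K \<nu> \<beta> t)" using T summable_iff_shift by blast
  have "suminf (hh K \<nu> \<beta> t) = (\<Sum>j. hh K \<nu> \<beta> t (j + N)) + (\<Sum>k<N. hh K \<nu> \<beta> t k)"
    by (rule suminf_split_initial_segment[OF s])
  also have "\<dots> \<le> t powr (\<nu>+\<beta>) / (1 - K powr (-\<nu>)) + t powr (\<nu>+\<beta>) / (1 - K powr (\<nu>+\<beta>))"
    using T H by simp
  finally show ?thesis using s by (simp add: field_simps)
qed

lemma lower_sum:
  fixes K \<nu> \<beta> :: real and m :: nat
  assumes K: "1 < K" and nu: "0 < \<nu>" and be: "\<beta> < 0" and ga: "\<nu> + \<beta> < 0"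
  shows "summable (\<lambda>j. hh K \<nu> \<beta> (ee K m) (j + Suc m)) \<and>
     (\<Sum>k<m. hh K \<nu> \<beta> (ee K m) k) + (\<Sum>j. hh K \<nu> \<beta> (ee K m) (j + Suc m)) \<le>
     ee K m powr (\<nu>+\<beta>) * (K powr (-\<nu>) / (1 - K powr (-\<nu>)) + K powr (\<nu>+\<beta>) / (1 - K powr (\<nu>+\<beta>)))"
proof -
  have t: "0 < ee K m" by (rule ee_pos[OF K])
  have T: "summable (\<lambda>j. hh K \<nu> \<beta> (ee K m) (j + Suc m)) \<and>
         (\<Sum>j. hh K \<nu> \<beta> (ee K m) (j + Suc m)) \<le> (1/K) powr \<nu> * ee K m powr (\<nu>+\<beta>) / (1 - K powr (-\<nu>))"
    by (rule tail_bound[OF K nu be t]) (use K ee_Suc[OF K, of m] in auto)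
  have H: "(\<Sum>k<m. hh K \<nu> \<beta> (ee K m) k) \<le> K powr (\<nu>+\<beta>) * ee K m powr (\<nu>+\<beta>) / (1 - K powr (\<nu>+\<beta>))"
  proof (rule head_bound[OF K nu be ga t])
    fix k assume k: "k < m"
    have "ee K m = ee K ((m - k) + k)" using k by (intro arg_cong[where f="ee K"]) auto
    also have "\<dots> = ee K k * K powr (- real (m - k))" by (rule ee_shift[OF K])
    finally have "ee K m = ee K k / K^(m - k)" using K
      by (simp add: powr_minus powr_realpow field_simps)
    moreover have "K^(m - k) = K * K^(m - Suc k)" using k by (simp flip: power_Suc add: Suc_diff_Suc)
    ultimately show "K * ee K m * K ^ (m - Suc k) \<le> ee K k" using K by (simp add: field_simps)
  qed (use K in simp)
  have "(1/K) powr \<nu> = K powr (-\<nu>)" using K by (simp add: powr_divide powr_minus divide_inverse inverse_powr)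
  with T H show ?thesis by (simp add: field_simps)
qed

lemma fK_eq: "fK K \<nu> \<beta> (Suc k) z =
   complex_of_real (ee K k powr \<nu>) * (complex_of_real (1 + ee K k) - z) powr complex_of_real \<beta>"
  by (simp add: fK_def ee_def)

lemma fK_norm: "norm (fK K \<nu> \<beta> (Suc k) z) = ee K k powr \<nu> * cmod (complex_of_real (1 + ee K k) - z) powr \<beta>"
  unfolding fK_eq norm_mult norm_of_real by (simp add: norm_powr_real_powr')

lemma w_lb: "1 + e - norm z \<le> cmod (complex_of_real (1 + e) - z)" if "0 \<le> e" for e :: real
proof -
  have "norm (complex_of_real (1 + e)) - norm z \<le> cmod (complex_of_real (1 + e) - z)"
    by (rule norm_triangle_ineq2)
  moreover have "norm (complex_of_real (1 + e)) = 1 + e" using that by (simp only: norm_of_real)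
  ultimately show ?thesis by linarith
qed

lemma fK_bound_R:
  assumes K: "1 < K" and be: "\<beta> < 0" and z: "norm z \<le> R" and R: "R < 1"
  shows "norm (fK K \<nu> \<beta> (Suc k) z) \<le> hh K \<nu> \<beta> (1 - R) k"
proof -
  have e: "0 < ee K k" by (rule ee_pos[OF K])
  have "ee K k + (1 - R) \<le> cmod (complex_of_real (1 + ee K k) - z)"
    using w_lb[of "ee K k" z] e z by linarith
  hence "cmod (complex_of_real (1 + ee K k) - z) powr \<beta> \<le> (ee K k + (1 - R)) powr \<beta>"
    using e R be by (intro powr_mono2') auto
  thus ?thesis unfolding fK_norm hh_def by (intro mult_left_mono) auto
qed

lemma fK_holo:
  assumes K: "1 < K"
  shows "fK K \<nu> \<beta> (Suc k) holomorphic_on ball 0 1"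
proof -
  have "(\<lambda>z. complex_of_real (ee K k powr \<nu>) * (complex_of_real (1 + ee K k) - z) powr complex_of_real \<beta>)
     holomorphic_on ball 0 1"
  proof (intro holomorphic_intros)
    fix z :: complex assume z: "z \<in> ball 0 1"
    have "Re z \<le> norm z" by (rule complex_Re_le_cmod)
    hence "0 < Re (complex_of_real (1 + ee K k) - z)" using z ee_pos[OF K, of k] by simp
    thus "complex_of_real (1 + ee K k) - z \<notin> \<real>\<^sub>\<le>\<^sub>0" by (auto simp: complex_nonpos_Reals_iff)
  qed
  thus ?thesis by (simp add: fK_eq[abs_def])
qed

lemma Phi_props:
  fixes K \<nu> \<beta> A :: real and a :: "nat \<Rightarrow> complex"
  assumes K: "1 < K" and nu: "0 < \<nu>" and be: "\<beta> < 0" and ga: "\<nu> + \<beta> < 0"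
    and A: "\<And>k. norm (a k) \<le> A"
  shows "\<And>z. norm z < 1 \<Longrightarrow> summable (\<lambda>k. norm (a k * fK K \<nu> \<beta> (Suc k) z))"
    and "PhiK K \<nu> \<beta> a holomorphic_on ball 0 1"
proof -
  have A0: "0 \<le> A" using A[of 0] norm_ge_zero order_trans by blast
  have sumR: "summable (\<lambda>k. A * hh K \<nu> \<beta> (1 - R) k)" if "R < 1" for R
    using full_bound[OF K nu be ga, of "1 - R"] that by (intro summable_mult) auto
  have bndR: "norm (a k * fK K \<nu> \<beta> (Suc k) z) \<le> A * hh K \<nu> \<beta> (1 - R) k"
    if "norm z \<le> R" "R < 1" for z R k
    unfolding norm_mult using A[of k] fK_bound_R[OF K be that] A0
    by (intro mult_mono) auto
  show "summable (\<lambda>k. norm (a k * fK K \<nu> \<beta> (Suc k) z))" if "norm z < 1" for z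
    by (rule summable_comparison_test'[OF sumR[OF that], of 0]) (use bndR[of z "norm z"] that in auto)
  show "PhiK K \<nu> \<beta> a holomorphic_on ball 0 1"
  proof (rule holomorphic_uniform_sequence[where f="\<lambda>n x. \<Sum>i<n. a i * fK K \<nu> \<beta> (Suc i) x"])
    fix n show "(\<lambda>x. \<Sum>i<n. a i * fK K \<nu> \<beta> (Suc i) x) holomorphic_on ball 0 1"
      by (intro holomorphic_intros fK_holo[OF K])
  next
    fix x :: complex assume x: "x \<in> ball 0 1"
    define d where "d = (1 - norm x) / 2"
    have d: "0 < d" using x by (simp add: d_def field_simps)
    have sub: "cball x d \<subseteq> ball 0 1"
    proof
      fix y assume "y \<in> cball x d"
      hence "norm y \<le> norm x + d" using norm_triangle_ineq2[of y x] by (simp add: dist_norm norm_minus_commute)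
      moreover have "norm x + d < 1" using x by (simp add: d_def field_simps)
      ultimately show "y \<in> ball 0 1" by simp
    qed
    have R: "norm x + d < 1" using x by (simp add: d_def field_simps)
    have "uniform_limit (cball x d) (\<lambda>n x. \<Sum>i<n. a i * fK K \<nu> \<beta> (Suc i) x)
            (\<lambda>x. \<Sum>i. a i * fK K \<nu> \<beta> (Suc i) x) sequentially"
    proof (rule Weierstrass_m_test)
      fix n y assume "y \<in> cball x d"
      hence "norm y \<le> norm x + d" using norm_triangle_ineq2[of y x] by (simp add: dist_norm norm_minus_commute)
      thus "norm (a n * fK K \<nu> \<beta> (Suc n) y) \<le> A * hh K \<nu> \<beta> (1 - (norm x + d)) n"
        by (rule bndR[OF _ R])
    qed (rule sumR[OF R])
    thus "\<exists>d. 0 < d \<and> cball x d \<subseteq> ball 0 1 \<and>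
      uniform_limit (cball x d) (\<lambda>n x. \<Sum>i<n. a i * fK K \<nu> \<beta> (Suc i) x) (PhiK K \<nu> \<beta> a) sequentially"
      using d sub unfolding PhiK_def by blast
  qed simp
qed

lemma int_bound:
  fixes s q :: real
  assumes s: "0 < s" and q: "1 < q"
  shows "(\<lambda>\<theta>. (s+\<theta>) powr (-q) + (s+2*pi-\<theta>) powr (-q)) integrable_on {0..2*pi}"
    and "integral {0..2*pi} (\<lambda>\<theta>. (s+\<theta>) powr (-q) + (s+2*pi-\<theta>) powr (-q)) \<le> 2 * s powr (1-q) / (q-1)"
proof -
  define Fa where "Fa = (\<lambda>\<theta>. ((s+\<theta>) powr (1-q) - (s+2*pi-\<theta>) powr (1-q)) / (1-q))"
  have hi: "((\<lambda>\<theta>. (s+\<theta>) powr (-q) + (s+2*pi-\<theta>) powr (-q)) has_integral (Fa (2*pi) - Fa 0)) {0..2*pi}"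
  proof (rule fundamental_theorem_of_calculus)
    fix x assume x: "x \<in> {0..2*pi}"
    have p1: "0 < s + x" "0 < s + 2*pi - x" using x s by auto
    have d1: "DERIV (\<lambda>\<theta>. (s+\<theta>) powr (1-q)) x :> (1-q) * (s+x) powr ((1-q) - of_nat 1) * 1"
      by (rule DERIV_fun_powr) (use p1 in \<open>auto intro!: derivative_eq_intros\<close>)
    have d2: "DERIV (\<lambda>\<theta>. (s+2*pi-\<theta>) powr (1-q)) x :> (1-q) * (s+2*pi-x) powr ((1-q) - of_nat 1) * (-1)"
      by (rule DERIV_fun_powr) (use p1 in \<open>auto intro!: derivative_eq_intros\<close>)
    have "(Fa has_real_derivative ((1-q) * (s+x) powr ((1-q) - of_nat 1) * 1
            - (1-q) * (s+2*pi-x) powr ((1-q) - of_nat 1) * (-1)) / (1-q)) (at x)"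
      unfolding Fa_def by (intro DERIV_cdivide DERIV_diff d1 d2)
    moreover have "((1-q) * (s+x) powr ((1-q) - of_nat 1) * 1
            - (1-q) * (s+2*pi-x) powr ((1-q) - of_nat 1) * (-1)) / (1-q)
          = (s+x) powr (-q) + (s+2*pi-x) powr (-q)" using q by (simp add: field_simps)
    ultimately show "(Fa has_vector_derivative (s+x) powr (-q) + (s+2*pi-x) powr (-q)) (at x within {0..2*pi})"
      by (simp add: has_real_derivative_iff_has_vector_derivative[symmetric] has_field_derivative_at_within)
  qed simp
  thus "(\<lambda>\<theta>. (s+\<theta>) powr (-q) + (s+2*pi-\<theta>) powr (-q)) integrable_on {0..2*pi}" by blast
  have "integral {0..2*pi} (\<lambda>\<theta>. (s+\<theta>) powr (-q) + (s+2*pi-\<theta>) powr (-q)) = Fa (2*pi) - Fa 0"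
    using hi by (rule integral_unique)
  also have "\<dots> = ((s + 2*pi) powr (1-q) - s powr (1-q))/(1-q) - (s powr (1-q) - (s + 2*pi) powr (1-q))/(1-q)"
    unfolding Fa_def by simp
  also have "\<dots> = 2 * (s powr (1-q) - (s + 2*pi) powr (1-q)) / (q-1)"
  proof -
    have gen: "(Y - X)/(1-q) - (X - Y)/(1-q) = 2 * (X - Y) / (q - 1)" for X Y :: real
    proof -
      have n1: "1 - q \<noteq> 0" "q - 1 \<noteq> 0" using q by auto
      have "(Y - X)/(1-q) = (X - Y)/(q-1)"
        by (metis minus_diff_eq minus_divide_divide)
      moreover have "(X - Y)/(1-q) = -((X - Y)/(q-1))"
        by (metis minus_diff_eq minus_divide_right)
      ultimately show ?thesis by simp
    qed
    show ?thesis by (rule gen)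
  qed
  also have "\<dots> \<le> 2 * s powr (1-q) / (q-1)"
  proof -
    have "2 * (s powr (1-q) - (s + 2*pi) powr (1-q)) \<le> 2 * s powr (1-q)" by simp
    thus ?thesis using q by (intro divide_right_mono) auto
  qed
  finally show "integral {0..2*pi} (\<lambda>\<theta>. (s+\<theta>) powr (-q) + (s+2*pi-\<theta>) powr (-q)) \<le> 2 * s powr (1-q) / (q-1)" .
qed

definition DK :: "real \<Rightarrow> real \<Rightarrow> real \<Rightarrow> real" where
  "DK K \<nu> \<beta> = 1 / (1 - K powr (-\<nu>)) + 1 / (1 - K powr (\<nu>+\<beta>))"

lemma pw_upper:
  fixes K \<nu> \<beta> A r \<theta> :: real and a :: "nat \<Rightarrow> complex"
  assumes K: "1 < K" and nu: "0 < \<nu>" and be: "\<beta> < 0" and ga: "\<nu> + \<beta> < 0"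
    and A: "\<And>k. norm (a k) \<le> A" and r: "0 \<le> r" "r < 1" and th: "0 \<le> \<theta>" "\<theta> \<le> 2*pi"
  shows "norm (PhiK K \<nu> \<beta> a (complex_of_real r * cis \<theta>)) \<le>
     A * 12 powr (-\<beta>) * DK K \<nu> \<beta> * ((1 - r) + min \<theta> (2*pi - \<theta>)) powr (\<nu>+\<beta>)"
proof -
  define z where "z = complex_of_real r * cis \<theta>"
  define t where "t = (1 - r) + min \<theta> (2*pi - \<theta>)"
  have t: "0 < t" using r th by (simp add: t_def)
  have nz: "norm z < 1" using r by (simp add: z_def norm_mult)
  have A0: "0 \<le> A" using A[of 0] norm_ge_zero order_trans by blast
  have bnd: "norm (a k * fK K \<nu> \<beta> (Suc k) z) \<le> A * 12 powr (-\<beta>) * hh K \<nu> \<beta> t k" for k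
  proof -
    have e: "0 < ee K k" "ee K k \<le> 1" using ee_pos[OF K] ee_le1[OF K] by auto
    have g: "(ee K k + t) / 12 \<le> cmod (complex_of_real (1 + ee K k) - z)"
      using geo_lb[OF r e th] unfolding z_def t_def by (simp add: add.assoc)
    have "cmod (complex_of_real (1 + ee K k) - z) powr \<beta> \<le> ((ee K k + t) / 12) powr \<beta>"
      by (rule powr_mono2') (use g e t be in auto)
    also have "\<dots> = 12 powr (-\<beta>) * (ee K k + t) powr \<beta>"
      unfolding powr_divide powr_minus by (simp add: field_simps)
    finally have "norm (fK K \<nu> \<beta> (Suc k) z) \<le> ee K k powr \<nu> * (12 powr (-\<beta>) * (ee K k + t) powr \<beta>)"
      unfolding fK_norm by (intro mult_left_mono) auto
    also have "\<dots> = 12 powr (-\<beta>) * hh K \<nu> \<beta> t k" by (simp add: hh_def)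
    finally show ?thesis unfolding norm_mult using A[of k] A0
      by (simp add: mult.assoc mult_mono)
  qed
  have FB: "summable (hh K \<nu> \<beta> t)" "suminf (hh K \<nu> \<beta> t) \<le> t powr (\<nu>+\<beta>) * DK K \<nu> \<beta>"
    using full_bound[OF K nu be ga t] unfolding DK_def by auto
  have sn: "summable (\<lambda>k. norm (a k * fK K \<nu> \<beta> (Suc k) z))"
    by (rule Phi_props(1)[OF K nu be ga A nz])
  have sb: "summable (\<lambda>k. A * 12 powr (-\<beta>) * hh K \<nu> \<beta> t k)" using FB(1) by (rule summable_mult)
  have "norm (PhiK K \<nu> \<beta> a z) \<le> (\<Sum>k. norm (a k * fK K \<nu> \<beta> (Suc k) z))"
    unfolding PhiK_def by (rule summable_norm[OF sn])
  also have "\<dots> \<le> (\<Sum>k. A * 12 powr (-\<beta>) * hh K \<nu> \<beta> t k)" by (rule suminf_le[OF bnd sn sb])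
  also have "\<dots> = A * 12 powr (-\<beta>) * suminf (hh K \<nu> \<beta> t)" using FB(1) by (rule suminf_mult)
  also have "\<dots> \<le> A * 12 powr (-\<beta>) * (t powr (\<nu>+\<beta>) * DK K \<nu> \<beta>)"
    using FB(2) A0 by (intro mult_left_mono) auto
  finally show ?thesis unfolding z_def t_def by (simp add: mult_ac)
qed

lemma F_cont:
  fixes K \<nu> \<beta> A r p :: real and a :: "nat \<Rightarrow> complex"
  assumes K: "1 < K" and nu: "0 < \<nu>" and be: "\<beta> < 0" and ga: "\<nu> + \<beta> < 0"
    and A: "\<And>k. norm (a k) \<le> A" and r: "0 \<le> r" "r < 1" and p: "0 < p"
  shows "continuous_on S (\<lambda>\<theta>. norm (PhiK K \<nu> \<beta> a (complex_of_real r * cis \<theta>)) powr p)"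
proof -
  have c1: "continuous_on (ball 0 1) (PhiK K \<nu> \<beta> a)"
    by (rule holomorphic_on_imp_continuous_on[OF Phi_props(2)[OF K nu be ga A]])
  have c2: "continuous_on S (\<lambda>\<theta>. complex_of_real r * cis \<theta>)"
    by (intro continuous_intros)
  have sub: "(\<lambda>\<theta>. complex_of_real r * cis \<theta>) ` S \<subseteq> ball 0 1" using r by (auto simp: norm_mult)
  have "continuous_on S (\<lambda>\<theta>. PhiK K \<nu> \<beta> a (complex_of_real r * cis \<theta>))"
    by (rule continuous_on_compose2[OF c1 c2 sub])
  hence "continuous_on S (\<lambda>\<theta>. norm (PhiK K \<nu> \<beta> a (complex_of_real r * cis \<theta>)))"
    by (rule continuous_on_norm)
  thus ?thesis using p by (intro continuous_on_powr') (auto intro: continuous_on_const)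
qed

lemma Mp_integral:
  assumes "continuous_on {0..2*pi} (\<lambda>\<theta>. norm (f (complex_of_real r * cis \<theta>)) powr p)"
  shows "Mp p r f = (integral {0..2*pi} (\<lambda>\<theta>. norm (f (complex_of_real r * cis \<theta>)) powr p) / (2*pi)) powr (1/p)"
  unfolding Mp_def using set_borel_integral_eq_integral(2)[OF borel_integrable_atLeastAtMost'[OF assms]]
  by simp

lemma powr_alg:
  fixes B s c p \<alpha> :: real
  assumes "0 \<le> B" "0 < s" "0 \<le> c" "0 < p"
  shows "(B powr p * s powr (-(\<alpha>*p)) * c) powr (1/p) = B * s powr (-\<alpha>) * c powr (1/p)"
proof -
  have "(B powr p * s powr (-(\<alpha>*p)) * c) powr (1/p) = (B powr p) powr (1/p) * (s powr (-(\<alpha>*p))) powr (1/p) * c powr (1/p)"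
    using assms by (simp add: powr_mult)
  also have "(B powr p) powr (1/p) = B" using assms by (simp add: powr_powr)
  also have "(s powr (-(\<alpha>*p))) powr (1/p) = s powr (-\<alpha>)" using assms by (simp add: powr_powr)
  finally show ?thesis .
qed

lemma upper_Mp:
  fixes K \<nu> \<beta> A r p \<alpha> :: real and a :: "nat \<Rightarrow> complex"
  assumes p: "0 < p" and al: "0 < \<alpha>" and bp: "\<beta> * p < -1" and nudef: "\<nu> = - (\<alpha> + \<beta> + 1 / p)"
    and nu: "0 < \<nu>" and K: "1 < K"
    and A: "\<And>k. norm (a k) \<le> A" and r: "0 \<le> r" "r < 1"
  shows "(1 - r) powr \<alpha> * Mp p r (PhiK K \<nu> \<beta> a) \<le>
     A * (12 powr (-\<beta>) * DK K \<nu> \<beta> * (1/(\<alpha>*p*pi)) powr (1/p))"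
proof -
  have be: "\<beta> < 0" using bp p by (smt (verit) mult_nonneg_nonneg)
  have gaeq: "\<nu> + \<beta> = -(\<alpha> + 1/p)" using nudef by simp
  have "0 < 1/p" using p by simp
  hence ga: "\<nu> + \<beta> < 0" using gaeq al by linarith
  have A0: "0 \<le> A" using A[of 0] norm_ge_zero order_trans by blast
  have DK0: "0 \<le> DK K \<nu> \<beta>" unfolding DK_def using K nu ga
    by (auto intro!: add_nonneg_nonneg simp: powr_less_one less_imp_le)
  define B where "B = A * 12 powr (-\<beta>) * DK K \<nu> \<beta>"
  have B0: "0 \<le> B" unfolding B_def using A0 DK0 by simp
  define s where "s = 1 - r"
  have s: "0 < s" using r by (simp add: s_def)
  define q where "q = \<alpha> * p + 1"
  have q: "1 < q" using al p by (simp add: q_def)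
  define F where "F = (\<lambda>\<theta>. norm (PhiK K \<nu> \<beta> a (complex_of_real r * cis \<theta>)) powr p)"
  define G where "G = (\<lambda>\<theta>. (s+\<theta>) powr (-q) + (s+2*pi-\<theta>) powr (-q))"
  have Fc: "continuous_on {0..2*pi} F" unfolding F_def by (rule F_cont[OF K nu be ga A r p])
  have Fi: "F integrable_on {0..2*pi}" by (rule integrable_continuous_interval[OF Fc])
  have Gi: "G integrable_on {0..2*pi}" unfolding G_def by (rule int_bound(1)[OF s q])
  have GI: "integral {0..2*pi} G \<le> 2 * s powr (1-q) / (q-1)" unfolding G_def by (rule int_bound(2)[OF s q])
  have FG: "F \<theta> \<le> B powr p * G \<theta>" if th: "\<theta> \<in> {0..2*pi}" for \<theta>
  proof -
    define t where "t = (1 - r) + min \<theta> (2*pi - \<theta>)"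
    have t: "0 < t" using r th by (auto simp: t_def min_def)
    have n: "norm (PhiK K \<nu> \<beta> a (complex_of_real r * cis \<theta>)) \<le> B * t powr (\<nu>+\<beta>)"
      using pw_upper[OF K nu be ga A r] th unfolding B_def t_def by auto
    have "F \<theta> \<le> (B * t powr (\<nu>+\<beta>)) powr p" unfolding F_def using n p by (intro powr_mono2) auto
    also have "\<dots> = B powr p * t powr (-q)"
    proof -
      have e: "(\<nu>+\<beta>) * p = -q" unfolding gaeq q_def using p by (simp add: field_simps)
      show ?thesis using B0 t by (simp add: powr_mult powr_powr e)
    qed
    also have "t powr (-q) \<le> G \<theta>"
    proof -
      have "t = s + \<theta> \<or> t = s + 2*pi - \<theta>" unfolding t_def s_def by (auto simp: min_def)
      moreover have "0 \<le> (s+\<theta>) powr (-q)" "0 \<le> (s+2*pi-\<theta>) powr (-q)" by auto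
      ultimately show ?thesis unfolding G_def by auto
    qed
    hence "B powr p * t powr (-q) \<le> B powr p * G \<theta>" by (intro mult_left_mono) auto
    finally show ?thesis .
  qed
  have I0: "0 \<le> integral {0..2*pi} F" by (rule integral_nonneg[OF Fi]) (simp add: F_def)
  have "integral {0..2*pi} F \<le> integral {0..2*pi} (\<lambda>\<theta>. B powr p * G \<theta>)"
  proof (rule integral_le[OF Fi])
    show "(\<lambda>\<theta>. B powr p * G \<theta>) integrable_on {0..2*pi}"
      using integrable_on_cmult_left[OF Gi, of "B powr p"] by simp
  qed (rule FG)
  also have "\<dots> = B powr p * integral {0..2*pi} G" by simp
  also have "\<dots> \<le> B powr p * (2 * s powr (1-q) / (q-1))" using GI by (intro mult_left_mono) auto
  finally have IB: "integral {0..2*pi} F \<le> B powr p * (2 * s powr (1-q) / (q-1))" .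
  have "Mp p r (PhiK K \<nu> \<beta> a) = (integral {0..2*pi} F / (2*pi)) powr (1/p)"
    unfolding F_def by (rule Mp_integral) (use Fc F_def in simp)
  also have "\<dots> \<le> (B powr p * (2 * s powr (1-q) / (q-1)) / (2*pi)) powr (1/p)"
    using IB I0 p by (intro powr_mono2 divide_right_mono) auto
  also have "B powr p * (2 * s powr (1-q) / (q-1)) / (2*pi) = B powr p * s powr (-(\<alpha>*p)) * (1/(\<alpha>*p*pi))"
    unfolding q_def by (simp add: field_simps)
  also have "(B powr p * s powr (-(\<alpha>*p)) * (1/(\<alpha>*p*pi))) powr (1/p) = B * s powr (-\<alpha>) * (1/(\<alpha>*p*pi)) powr (1/p)"
    using B0 s p al by (intro powr_alg) auto
  finally have M: "Mp p r (PhiK K \<nu> \<beta> a) \<le> B * s powr (-\<alpha>) * (1/(\<alpha>*p*pi)) powr (1/p)" .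
  have "(1 - r) powr \<alpha> * Mp p r (PhiK K \<nu> \<beta> a) \<le> s powr \<alpha> * (B * s powr (-\<alpha>) * (1/(\<alpha>*p*pi)) powr (1/p))"
    unfolding s_def[symmetric] using M by (intro mult_left_mono) auto
  also have "\<dots> = B * (1/(\<alpha>*p*pi)) powr (1/p)" using s
    by (simp add: powr_minus field_simps)
  finally show ?thesis unfolding B_def by (simp add: mult_ac)
qed

lemma cis_dist: fixes \<theta> :: real assumes "0 \<le> \<theta>" shows "cmod (1 - cis \<theta>) \<le> \<theta>"
proof -
  have re: "Re (1 - cis \<theta>) = 1 - cos \<theta>" and im: "Im (1 - cis \<theta>) = - sin \<theta>" by simp_all
  have e1: "(cmod (1 - cis \<theta>))^2 = (1 - cos \<theta>)^2 + (- sin \<theta>)^2" by (simp only: cmod_power2 re im)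
  have "(1 - cos \<theta>)^2 + (- sin \<theta>)^2 = 1 - 2 * cos \<theta> + ((sin \<theta>)^2 + (cos \<theta>)^2)"
    by (simp add: power2_eq_square algebra_simps)
  hence e2: "(1 - cos \<theta>)^2 + (- sin \<theta>)^2 = 2 - 2 * cos \<theta>" by simp
  have e3: "2 - 2 * cos \<theta> \<le> \<theta>^2" using cos_lb[OF assms] by linarith
  have "(cmod (1 - cis \<theta>))^2 \<le> \<theta>^2" using e1 e2 e3 by linarith
  from power2_le_imp_le[OF this assms] show ?thesis .
qed

lemma frac_le: fixes x :: real assumes "0 \<le> x" "x \<le> 1/2" shows "x / (1 - x) \<le> 2 * x"
proof -
  have "x * (2 * x) \<le> x * 1" using assms by (intro mult_left_mono) auto
  hence "x \<le> 2 * x * (1 - x)" by (simp add: algebra_simps)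
  thus ?thesis using assms by (simp add: divide_le_eq)
qed

lemma ee_lt1: "1 < K \<Longrightarrow> ee K k < 1"
  unfolding ee_def by (simp add: powr_less_one)

lemma lower_Mp:
  fixes K \<nu> \<beta> A p \<alpha> :: real and a :: "nat \<Rightarrow> complex" and m :: nat
  assumes p: "0 < p" and al: "0 < \<alpha>" and bp: "\<beta> * p < -1" and nudef: "\<nu> = - (\<alpha> + \<beta> + 1 / p)"
    and nu: "0 < \<nu>" and K: "1 < K"
    and q1: "K powr (-\<nu>) \<le> 3 powr \<beta> / 16" and q2: "K powr (\<nu>+\<beta>) \<le> 3 powr \<beta> / 16"
    and A: "\<And>k. norm (a k) \<le> A" and am: "A \<le> 2 * norm (a m)"
  shows "A * (3 powr \<beta> / 4 * (1/(2*pi)) powr (1/p)) \<le>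
     (1 - (1 - ee K m)) powr \<alpha> * Mp p (1 - ee K m) (PhiK K \<nu> \<beta> a)"
proof -
  have be: "\<beta> < 0" using bp p by (smt (verit) mult_nonneg_nonneg)
  have gaeq: "\<nu> + \<beta> = -(\<alpha> + 1/p)" using nudef by simp
  have "0 < 1/p" using p by simp
  hence ga: "\<nu> + \<beta> < 0" using gaeq al by linarith
  have A0: "0 \<le> A" using A[of 0] norm_ge_zero order_trans by blast
  define e where "e = ee K m"
  have e: "0 < e" "e < 1" unfolding e_def using ee_pos[OF K] ee_lt1[OF K] by auto
  define r where "r = 1 - e"
  have r: "0 \<le> r" "r < 1" using e by (auto simp: r_def)
  define c3 where "c3 = 3 powr \<beta>"
  have c3: "0 < c3" "c3 \<le> 1" unfolding c3_def using be
    by (auto intro: order_trans[OF powr_mono[of \<beta> 0 3]])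
  define g where "g = \<nu> + \<beta>"
  define L where "L = A * (e powr g * (c3 / 4))"
  have L0: "0 \<le> L" unfolding L_def using A0 c3 by simp
  have eps: "K powr (-\<nu>) / (1 - K powr (-\<nu>)) + K powr g / (1 - K powr g) \<le> c3 / 4"
  proof -
    have k1: "K powr (-\<nu>) \<le> 1/2" using q1 c3(2) unfolding c3_def by linarith
    have k2: "K powr g \<le> 1/2" using q2 c3(2) unfolding c3_def g_def by linarith
    have "K powr (-\<nu>) / (1 - K powr (-\<nu>)) \<le> 2 * K powr (-\<nu>)"
      by (rule frac_le[OF powr_ge_zero k1])
    moreover have "K powr g / (1 - K powr g) \<le> 2 * K powr g"
      by (rule frac_le[OF powr_ge_zero k2])
    ultimately show ?thesis using q1 q2 unfolding c3_def g_def by linarith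
  qed
  have PW: "L \<le> norm (PhiK K \<nu> \<beta> a (complex_of_real r * cis \<theta>))" if th: "0 \<le> \<theta>" "\<theta> \<le> e" for \<theta>
  proof -
    define z where "z = complex_of_real r * cis \<theta>"
    have nz: "norm z = r" using r by (simp add: z_def norm_mult)
    define G where "G = (\<lambda>k. a k * fK K \<nu> \<beta> (Suc k) z)"
    have sn: "summable (\<lambda>k. norm (G k))" unfolding G_def
      by (rule Phi_props(1)[OF K nu be ga A]) (use nz r in simp)
    have sG: "summable G" using sn by (rule summable_norm_cancel)
    have bk: "norm (G k) \<le> A * hh K \<nu> \<beta> e k" for k
    proof -
      have "norm (fK K \<nu> \<beta> (Suc k) z) \<le> hh K \<nu> \<beta> (1 - r) k"
        by (rule fK_bound_R[OF K be]) (use nz r in auto)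
      thus ?thesis unfolding G_def norm_mult r_def using A[of k] A0
        by (simp add: mult_mono)
    qed
    define T where "T = (\<Sum>j. G (j + Suc m))"
    define H where "H = (\<Sum>k<m. G k)"
    have Phi_eq: "PhiK K \<nu> \<beta> a z = T + H + G m"
      unfolding PhiK_def T_def H_def G_def[symmetric]
      using suminf_split_initial_segment[OF sG, of "Suc m"] by simp
    note LS0 = lower_sum[OF K nu be ga, of m, folded e_def g_def]
    have LS: "summable (\<lambda>j. hh K \<nu> \<beta> e (j + Suc m))"
      "(\<Sum>k<m. hh K \<nu> \<beta> e k) + (\<Sum>j. hh K \<nu> \<beta> e (j + Suc m)) \<le>
        e powr g * (K powr (-\<nu>) / (1 - K powr (-\<nu>)) + K powr g / (1 - K powr g))"
      using LS0 by blast+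
    have snT: "summable (\<lambda>j. norm (G (j + Suc m)))" using sn by (subst summable_iff_shift)
    have "norm T \<le> (\<Sum>j. norm (G (j + Suc m)))" unfolding T_def by (rule summable_norm[OF snT])
    also have "\<dots> \<le> (\<Sum>j. A * hh K \<nu> \<beta> e (j + Suc m))"
      by (rule suminf_le[OF _ snT]) (use bk LS(1) in \<open>auto intro: summable_mult\<close>)
    also have "\<dots> = A * (\<Sum>j. hh K \<nu> \<beta> e (j + Suc m))" using LS(1) by (rule suminf_mult)
    finally have nT: "norm T \<le> A * (\<Sum>j. hh K \<nu> \<beta> e (j + Suc m))" .
    have "norm H \<le> (\<Sum>k<m. norm (G k))" unfolding H_def by (rule norm_sum)
    also have "\<dots> \<le> (\<Sum>k<m. A * hh K \<nu> \<beta> e k)" by (rule sum_mono) (rule bk)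
    also have "\<dots> = A * (\<Sum>k<m. hh K \<nu> \<beta> e k)" by (simp add: sum_distrib_left)
    finally have nH: "norm H \<le> A * (\<Sum>k<m. hh K \<nu> \<beta> e k)" .
    have "norm T + norm H \<le> A * (e powr g * (K powr (-\<nu>) / (1 - K powr (-\<nu>)) + K powr g / (1 - K powr g)))"
    proof -
      have "A * (\<Sum>j. hh K \<nu> \<beta> e (j + Suc m)) + A * (\<Sum>k<m. hh K \<nu> \<beta> e k)
          = A * ((\<Sum>k<m. hh K \<nu> \<beta> e k) + (\<Sum>j. hh K \<nu> \<beta> e (j + Suc m)))"
        by (simp add: distrib_left)
      also have "\<dots> \<le> A * (e powr g * (K powr (-\<nu>) / (1 - K powr (-\<nu>)) + K powr g / (1 - K powr g)))"
        using LS(2) A0 by (rule mult_left_mono)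
      finally show ?thesis using nT nH by linarith
    qed
    also have "\<dots> \<le> A * (e powr g * (c3 / 4))" by (rule mult_left_mono[OF mult_left_mono[OF eps powr_ge_zero] A0])
    finally have nTH: "norm T + norm H \<le> L" unfolding L_def .
    define w where "w = complex_of_real (1 + e) - z"
    have wlb: "2 * e \<le> cmod w" using w_lb[of e z] e nz unfolding w_def r_def by simp
    have wub: "cmod w \<le> 3 * e"
    proof -
      have weq: "w = complex_of_real (1 + e - r) + complex_of_real r * (1 - cis \<theta>)"
        unfolding w_def z_def by (simp add: algebra_simps)
      have "cmod w \<le> cmod (complex_of_real (1 + e - r)) + cmod (complex_of_real r * (1 - cis \<theta>))"
        unfolding weq by (rule norm_triangle_ineq)
      also have "\<dots> = (1 + e - r) + r * cmod (1 - cis \<theta>)"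
        using r e unfolding norm_mult norm_of_real by simp
      finally have "cmod w \<le> (1 + e - r) + r * cmod (1 - cis \<theta>)" .
      also have "r * cmod (1 - cis \<theta>) \<le> 1 * \<theta>" using r cis_dist[OF th(1)] by (intro mult_mono) auto
      finally show ?thesis using th unfolding r_def by simp
    qed
    have "(3 * e) powr \<beta> \<le> cmod w powr \<beta>" by (rule powr_mono2') (insert be wlb e wub, linarith)+
    hence "e powr \<nu> * (3 * e) powr \<beta> \<le> norm (fK K \<nu> \<beta> (Suc m) z)"
      unfolding fK_norm w_def[symmetric] e_def[symmetric] by (intro mult_left_mono) auto
    moreover have "e powr \<nu> * (3 * e) powr \<beta> = c3 * e powr g"
      unfolding c3_def g_def using e by (simp add: powr_mult powr_add)
    ultimately have fm: "c3 * e powr g \<le> norm (fK K \<nu> \<beta> (Suc m) z)" by simp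
    have "A / 2 * (c3 * e powr g) \<le> norm (a m) * norm (fK K \<nu> \<beta> (Suc m) z)"
      using am fm c3 by (intro mult_mono) auto
    moreover have "2 * L = A / 2 * (c3 * e powr g)" unfolding L_def by (simp add: field_simps)
    ultimately have Gm: "2 * L \<le> norm (G m)" unfolding G_def norm_mult by simp
    have Geq: "G m = PhiK K \<nu> \<beta> a z - T - H" using Phi_eq by simp
    have "norm (G m) \<le> norm (PhiK K \<nu> \<beta> a z - T) + norm H"
      unfolding Geq by (rule norm_triangle_ineq4)
    moreover have "norm (PhiK K \<nu> \<beta> a z - T) \<le> norm (PhiK K \<nu> \<beta> a z) + norm T"
      by (rule norm_triangle_ineq4)
    ultimately have "norm (G m) \<le> norm (PhiK K \<nu> \<beta> a z) + norm T + norm H" by linarith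
    thus ?thesis using Gm nTH unfolding z_def by linarith
  qed
  define F where "F = (\<lambda>\<theta>. norm (PhiK K \<nu> \<beta> a (complex_of_real r * cis \<theta>)) powr p)"
  have Fc: "continuous_on UNIV F" unfolding F_def by (rule F_cont[OF K nu be ga A r p])
  have Fi: "F integrable_on {x..y}" for x y by (rule integrable_continuous_interval) (use Fc continuous_on_subset in blast)
  have "e * L powr p = integral {0..e} (\<lambda>_. L powr p)" using e by simp
  also have "\<dots> \<le> integral {0..e} F"
  proof (rule integral_le[OF _ Fi])
    show "(\<lambda>_. L powr p) integrable_on {0..e}" by auto
    fix \<theta> assume "\<theta> \<in> {0..e}"
    thus "L powr p \<le> F \<theta>" unfolding F_def using PW[of \<theta>] L0 p by (intro powr_mono2) auto
  qed
  also have "\<dots> \<le> integral {0..2*pi} F"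
    by (rule integral_subset_le[OF _ Fi Fi]) (use e pi_gt3 in \<open>auto simp: F_def\<close>)
  finally have IL: "e * L powr p \<le> integral {0..2*pi} F" .
  have "(e * L powr p / (2*pi)) powr (1/p) \<le> (integral {0..2*pi} F / (2*pi)) powr (1/p)"
    using IL e L0 p by (intro powr_mono2 divide_right_mono) auto
  also have "\<dots> = Mp p r (PhiK K \<nu> \<beta> a)"
    unfolding F_def by (rule Mp_integral[symmetric]) (use Fc F_def continuous_on_subset in blast)
  finally have M: "(e * L powr p / (2*pi)) powr (1/p) \<le> Mp p r (PhiK K \<nu> \<beta> a)" .
  have "(e * L powr p / (2*pi)) powr (1/p) = e powr (1/p) * L * (1/(2*pi)) powr (1/p)"
  proof -
    have "(e * L powr p / (2*pi)) powr (1/p) = e powr (1/p) * (L powr p) powr (1/p) * (1/(2*pi)) powr (1/p)"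
      using e L0 by (simp add: powr_mult powr_divide)
    also have "(L powr p) powr (1/p) = L" using L0 p by (simp add: powr_powr)
    finally show ?thesis .
  qed
  with M have M2: "e powr (1/p) * L * (1/(2*pi)) powr (1/p) \<le> Mp p r (PhiK K \<nu> \<beta> a)" by simp
  have "e powr \<alpha> * (e powr (1/p) * L * (1/(2*pi)) powr (1/p)) = A * (c3 / 4 * (1/(2*pi)) powr (1/p)) * (e powr \<alpha> * e powr (1/p) * e powr g)"
    unfolding L_def by (simp only: mult_ac)
  also have "e powr \<alpha> * e powr (1/p) * e powr g = 1"
    unfolding g_def gaeq using e by (simp flip: powr_add)
  finally have "A * (c3 / 4 * (1/(2*pi)) powr (1/p)) = e powr \<alpha> * (e powr (1/p) * L * (1/(2*pi)) powr (1/p))" by simp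
  also have "\<dots> \<le> e powr \<alpha> * Mp p r (PhiK K \<nu> \<beta> a)" using M2 by (intro mult_left_mono) auto
  finally show ?thesis unfolding r_def c3_def e_def by simp
qed

lemma linf_bound:
  assumes "bounded (range a)"
  shows "bdd_above (range (\<lambda>n. norm (a n)))" and "norm (a n) \<le> linf_norm a"
proof -
  obtain M where M: "\<forall>x\<in>range a. norm x \<le> M" using assms unfolding bounded_iff by blast
  show bdd: "bdd_above (range (\<lambda>n. norm (a n)))" using M by (intro bdd_aboveI2) auto
  show "norm (a n) \<le> linf_norm a" unfolding linf_norm_def by (rule cSUP_upper[OF _ bdd]) simp
qed

lemma Hpia_facts:
  fixes p \<alpha> \<beta> \<nu> K :: real and a :: "nat \<Rightarrow> complex"
  assumes p: "0 < p" and al: "0 < \<alpha>" and bp: "\<beta> * p < -1" and nudef: "\<nu> = - (\<alpha> + \<beta> + 1 / p)"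
    and nu: "0 < \<nu>" and K: "1 < K"
    and q1: "K powr (-\<nu>) \<le> 3 powr \<beta> / 16" and q2: "K powr (\<nu>+\<beta>) \<le> 3 powr \<beta> / 16"
    and ba: "bounded (range a)"
  shows "in_Hpia p \<alpha> (PhiK K \<nu> \<beta> a)"
    and "Hpia_norm p \<alpha> (PhiK K \<nu> \<beta> a) \<le> (12 powr (-\<beta>) * DK K \<nu> \<beta> * (1/(\<alpha>*p*pi)) powr (1/p)) * linf_norm a"
    and "(3 powr \<beta> / 4 * (1/(2*pi)) powr (1/p)) * linf_norm a \<le> Hpia_norm p \<alpha> (PhiK K \<nu> \<beta> a)"
proof -
  have be: "\<beta> < 0" using bp p by (smt (verit) mult_nonneg_nonneg)
  have gaeq: "\<nu> + \<beta> = -(\<alpha> + 1/p)" using nudef by simp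
  have "0 < 1/p" using p by simp
  hence ga: "\<nu> + \<beta> < 0" using gaeq al by linarith
  define A where "A = linf_norm a"
  have A: "\<And>k. norm (a k) \<le> A" unfolding A_def by (rule linf_bound(2)[OF ba])
  have A0: "0 \<le> A" using A[of 0] norm_ge_zero order_trans by blast
  define C where "C = 12 powr (-\<beta>) * DK K \<nu> \<beta> * (1/(\<alpha>*p*pi)) powr (1/p)"
  define f where "f = (\<lambda>r. (1 - r) powr \<alpha> * Mp p r (PhiK K \<nu> \<beta> a))"
  have up: "f r \<le> C * A" if "r \<in> {0..<1}" for r
    using upper_Mp[OF p al bp nudef nu K A] that unfolding f_def C_def by (auto simp: mult_ac)
  have bdd: "bdd_above (f ` {0..<1})" using up by (intro bdd_aboveI2) auto
  have hol: "PhiK K \<nu> \<beta> a holomorphic_on ball 0 1" by (rule Phi_props(2)[OF K nu be ga A])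
  show "in_Hpia p \<alpha> (PhiK K \<nu> \<beta> a)" unfolding in_Hpia_def
    using hol bdd analytic_on_open[of "ball 0 1"] unfolding f_def by auto
  have HN: "Hpia_norm p \<alpha> (PhiK K \<nu> \<beta> a) = (SUP r\<in>{0..<1}. f r)" unfolding Hpia_norm_def f_def ..
  show "Hpia_norm p \<alpha> (PhiK K \<nu> \<beta> a) \<le> C * linf_norm a"
    unfolding HN A_def[symmetric] by (rule cSUP_least) (use up in auto)
  show "(3 powr \<beta> / 4 * (1/(2*pi)) powr (1/p)) * linf_norm a \<le> Hpia_norm p \<alpha> (PhiK K \<nu> \<beta> a)"
  proof (cases "A = 0")
    case True
    have "0 \<le> f 0" unfolding f_def Mp_def by simp
    also have "f 0 \<le> (SUP r\<in>{0..<1}. f r)" by (rule cSUP_upper[OF _ bdd]) simp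
    finally show ?thesis unfolding HN A_def[symmetric] True by simp
  next
    case False
    hence Apos: "0 < A" using A0 by simp
    have "A / 2 < (SUP n. norm (a n))" using Apos unfolding A_def linf_norm_def by simp
    hence "\<exists>n\<in>UNIV. A/2 < norm (a n)"
      using less_cSUP_iff[of UNIV "\<lambda>n. norm (a n)" "A/2"] linf_bound(1)[OF ba] by blast
    then obtain m where m: "A / 2 < norm (a m)" by blast
    have am: "A \<le> 2 * norm (a m)" using m by simp
    have "A * (3 powr \<beta> / 4 * (1/(2*pi)) powr (1/p)) \<le> f (1 - ee K m)"
      unfolding f_def by (rule lower_Mp[where a=a and A=A and m=m, OF p al bp nudef nu K q1 q2 A am])
    also have "f (1 - ee K m) \<le> (SUP r\<in>{0..<1}. f r)"
      by (rule cSUP_upper[OF _ bdd]) (use ee_pos[OF K, of m] ee_lt1[OF K, of m] in auto)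
    finally show ?thesis unfolding HN A_def[symmetric] by (simp add: mult_ac)
  qed
qed

lemma Phi_linear:
  fixes K \<nu> \<beta> :: real and a b :: "nat \<Rightarrow> complex" and c z :: complex
  assumes K: "1 < K" and nu: "0 < \<nu>" and be: "\<beta> < 0" and ga: "\<nu> + \<beta> < 0"
    and ba: "bounded (range a)" and bb: "bounded (range b)" and z: "z \<in> ball 0 1"
  shows "summable (\<lambda>k. a k * fK K \<nu> \<beta> (Suc k) z)"
    and "PhiK K \<nu> \<beta> (\<lambda>n. a n + c * b n) z = PhiK K \<nu> \<beta> a z + c * PhiK K \<nu> \<beta> b z"
proof -
  have nz: "norm z < 1" using z by simp
  have sa: "summable (\<lambda>k. a k * fK K \<nu> \<beta> (Suc k) z)"
    by (rule summable_norm_cancel[OF Phi_props(1)[OF K nu be ga linf_bound(2)[OF ba] nz]])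
  have sb: "summable (\<lambda>k. b k * fK K \<nu> \<beta> (Suc k) z)"
    by (rule summable_norm_cancel[OF Phi_props(1)[OF K nu be ga linf_bound(2)[OF bb] nz]])
  show "summable (\<lambda>k. a k * fK K \<nu> \<beta> (Suc k) z)" by (rule sa)
  have sb': "summable (\<lambda>k. c * (b k * fK K \<nu> \<beta> (Suc k) z))" using sb by (rule summable_mult)
  have "PhiK K \<nu> \<beta> (\<lambda>n. a n + c * b n) z = (\<Sum>k. a k * fK K \<nu> \<beta> (Suc k) z + c * (b k * fK K \<nu> \<beta> (Suc k) z))"
    unfolding PhiK_def by (simp add: algebra_simps)
  also have "\<dots> = (\<Sum>k. a k * fK K \<nu> \<beta> (Suc k) z) + (\<Sum>k. c * (b k * fK K \<nu> \<beta> (Suc k) z))"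
    by (rule suminf_add[OF sa sb', symmetric])
  also have "(\<Sum>k. c * (b k * fK K \<nu> \<beta> (Suc k) z)) = c * PhiK K \<nu> \<beta> b z"
    unfolding PhiK_def by (rule suminf_mult[OF sb])
  finally show "PhiK K \<nu> \<beta> (\<lambda>n. a n + c * b n) z = PhiK K \<nu> \<beta> a z + c * PhiK K \<nu> \<beta> b z"
    unfolding PhiK_def .
qed

lemma Hpia_norm_zero:
  assumes "\<And>z. z \<in> ball 0 1 \<Longrightarrow> f z = 0" and "0 < p"
  shows "Hpia_norm p \<alpha> f = 0"
proof -
  have "Mp p r f = 0" if r: "r \<in> {0..<1}" for r
  proof -
    have "(\<lambda>\<theta>. norm (f (complex_of_real r * cis \<theta>)) powr p) = (\<lambda>\<theta>. 0)"
      using assms r by (auto simp: norm_mult)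
    thus ?thesis unfolding Mp_def using assms(2) by simp
  qed
  hence "(\<lambda>r. (1 - r) powr \<alpha> * Mp p r f) ` {0..<1} = {0}" by force
  thus ?thesis unfolding Hpia_norm_def by simp
qed

lemma main_K:
  fixes p \<alpha> \<beta> \<nu> K :: real
  assumes p: "0 < p" and al: "0 < \<alpha>" and bp: "\<beta> * p < -1" and nudef: "\<nu> = - (\<alpha> + \<beta> + 1 / p)"
    and nu: "0 < \<nu>" and K: "1 < K"
    and q1: "K powr (-\<nu>) \<le> 3 powr \<beta> / 16" and q2: "K powr (\<nu>+\<beta>) \<le> 3 powr \<beta> / 16"
  shows "(\<forall>a. bounded (range a) \<longrightarrow>
        (\<forall>z\<in>ball 0 1. summable (\<lambda>k. a k * fK K \<nu> \<beta> (Suc k) z))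
      \<and> in_Hpia p \<alpha> (PhiK K \<nu> \<beta> a))
    \<and> (\<forall>a b c. bounded (range a) \<longrightarrow> bounded (range b) \<longrightarrow>
        (\<forall>z\<in>ball 0 1. PhiK K \<nu> \<beta> (\<lambda>n. a n + c * b n) z
                       = PhiK K \<nu> \<beta> a z + c * PhiK K \<nu> \<beta> b z))
    \<and> (\<forall>a b. bounded (range a) \<longrightarrow> bounded (range b) \<longrightarrow>
        (\<forall>z\<in>ball 0 1. PhiK K \<nu> \<beta> a z = PhiK K \<nu> \<beta> b z) \<longrightarrow> a = b)
    \<and> (\<exists>c C. 0 < c \<and> 0 < C \<and> (\<forall>a. bounded (range a) \<longrightarrow>
        c * linf_norm a \<le> Hpia_norm p \<alpha> (PhiK K \<nu> \<beta> a)
        \<and> Hpia_norm p \<alpha> (PhiK K \<nu> \<beta> a) \<le> C * linf_norm a))"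
proof -
  have be: "\<beta> < 0" using bp p by (smt (verit) mult_nonneg_nonneg)
  have gaeq: "\<nu> + \<beta> = -(\<alpha> + 1/p)" using nudef by simp
  have "0 < 1/p" using p by simp
  hence ga: "\<nu> + \<beta> < 0" using gaeq al by linarith
  note HF = Hpia_facts[OF p al bp nudef nu K q1 q2]
  define c where "c = 3 powr \<beta> / 4 * (1/(2*pi)) powr (1/p)"
  define C where "C = 12 powr (-\<beta>) * DK K \<nu> \<beta> * (1/(\<alpha>*p*pi)) powr (1/p)"
  have c0: "0 < c" unfolding c_def using p by simp
  have DK0: "0 < DK K \<nu> \<beta>" unfolding DK_def using K nu ga
    by (auto intro!: add_pos_pos simp: powr_less_one)
  have C0: "0 < C" unfolding C_def using p al DK0 by simp
  have P1: "\<forall>a. bounded (range a) \<longrightarrow>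
        (\<forall>z\<in>ball 0 1. summable (\<lambda>k. a k * fK K \<nu> \<beta> (Suc k) z)) \<and> in_Hpia p \<alpha> (PhiK K \<nu> \<beta> a)"
    using Phi_linear(1)[OF K nu be ga] HF(1) by blast
  have P2: "\<forall>a b c. bounded (range a) \<longrightarrow> bounded (range b) \<longrightarrow>
        (\<forall>z\<in>ball 0 1. PhiK K \<nu> \<beta> (\<lambda>n. a n + c * b n) z = PhiK K \<nu> \<beta> a z + c * PhiK K \<nu> \<beta> b z)"
    using Phi_linear(2)[OF K nu be ga] by blast
  have P4: "\<forall>a. bounded (range a) \<longrightarrow>
        c * linf_norm a \<le> Hpia_norm p \<alpha> (PhiK K \<nu> \<beta> a) \<and> Hpia_norm p \<alpha> (PhiK K \<nu> \<beta> a) \<le> C * linf_norm a"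
    using HF(2,3) unfolding c_def C_def by blast
  have P3: "\<forall>a b. bounded (range a) \<longrightarrow> bounded (range b) \<longrightarrow>
        (\<forall>z\<in>ball 0 1. PhiK K \<nu> \<beta> a z = PhiK K \<nu> \<beta> b z) \<longrightarrow> a = b"
  proof (intro allI impI)
    fix a b :: "nat \<Rightarrow> complex"
    assume ba: "bounded (range a)" and bb: "bounded (range b)"
      and eq: "\<forall>z\<in>ball 0 1. PhiK K \<nu> \<beta> a z = PhiK K \<nu> \<beta> b z"
    define d where "d = (\<lambda>n. a n + (-1) * b n)"
    have bd: "bounded (range d)"
    proof -
      obtain Ma where Ma: "\<forall>x\<in>range a. norm x \<le> Ma" using ba unfolding bounded_iff by blast
      obtain Mb where Mb: "\<forall>x\<in>range b. norm x \<le> Mb" using bb unfolding bounded_iff by blast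
      have "norm (d n) \<le> Ma + Mb" for n
      proof -
        have "norm (d n) \<le> norm (a n) + norm (b n)" unfolding d_def using norm_triangle_ineq4[of "a n" "b n"] by simp
        also have "\<dots> \<le> Ma + Mb" using Ma Mb by (intro add_mono) auto
        finally show ?thesis .
      qed
      thus ?thesis unfolding bounded_iff by blast
    qed
    have z: "PhiK K \<nu> \<beta> d z = 0" if "z \<in> ball 0 1" for z
      using Phi_linear(2)[OF K nu be ga ba bb that, of "-1"] eq that unfolding d_def by simp
    have "Hpia_norm p \<alpha> (PhiK K \<nu> \<beta> d) = 0" by (rule Hpia_norm_zero[OF z p])
    hence "c * linf_norm d \<le> 0" using P4 bd by auto
    hence ld: "linf_norm d \<le> 0" using c0 by (simp add: mult_le_0_iff)
    show "a = b"
    proof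
      fix n
      have "norm (d n) \<le> 0" using linf_bound(2)[OF bd, of n] ld by linarith
      thus "a n = b n" unfolding d_def by simp
    qed
  qed
  show ?thesis using P1 P2 P3 P4 c0 C0 by blast
qed

theorem proposition6p7:
  fixes p \<alpha> \<beta> \<nu> :: real
  assumes "0 < p" and "0 < \<alpha>" and "\<beta> * p < -1"
    and "\<nu> = - (\<alpha> + \<beta> + 1 / p)" and "0 < \<nu>"
  shows "\<exists>K0>1. \<forall>K>K0.
    (\<forall>a. bounded (range a) \<longrightarrow>
        (\<forall>z\<in>ball 0 1. summable (\<lambda>k. a k * fK K \<nu> \<beta> (Suc k) z))
      \<and> in_Hpia p \<alpha> (PhiK K \<nu> \<beta> a))
    \<and> (\<forall>a b c. bounded (range a) \<longrightarrow> bounded (range b) \<longrightarrow>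
        (\<forall>z\<in>ball 0 1. PhiK K \<nu> \<beta> (\<lambda>n. a n + c * b n) z
                       = PhiK K \<nu> \<beta> a z + c * PhiK K \<nu> \<beta> b z))
    \<and> (\<forall>a b. bounded (range a) \<longrightarrow> bounded (range b) \<longrightarrow>
        (\<forall>z\<in>ball 0 1. PhiK K \<nu> \<beta> a z = PhiK K \<nu> \<beta> b z) \<longrightarrow> a = b)
    \<and> (\<exists>c C. 0 < c \<and> 0 < C \<and> (\<forall>a. bounded (range a) \<longrightarrow>
        c * linf_norm a \<le> Hpia_norm p \<alpha> (PhiK K \<nu> \<beta> a)
        \<and> Hpia_norm p \<alpha> (PhiK K \<nu> \<beta> a) \<le> C * linf_norm a))"
proof -
  note p = assms(1) and al = assms(2) and bp = assms(3) and nudef = assms(4) and nu = assms(5)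
  have be: "\<beta> < 0" using bp p by (smt (verit) mult_nonneg_nonneg)
  have gaeq: "\<nu> + \<beta> = -(\<alpha> + 1/p)" using nudef by simp
  have "0 < 1/p" using p by simp
  hence ga: "\<nu> + \<beta> < 0" using gaeq al by linarith
  define \<eta> where "\<eta> = 3 powr \<beta> / 16"
  have eta: "0 < \<eta>" unfolding \<eta>_def by simp
  define K0 where "K0 = max 2 (max (\<eta> powr (-1/\<nu>)) (\<eta> powr (1/(\<nu>+\<beta>))))"
  have K0: "1 < K0" unfolding K0_def by simp
  have "\<forall>K>K0. (\<forall>a. bounded (range a) \<longrightarrow>
        (\<forall>z\<in>ball 0 1. summable (\<lambda>k. a k * fK K \<nu> \<beta> (Suc k) z))
      \<and> in_Hpia p \<alpha> (PhiK K \<nu> \<beta> a))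
    \<and> (\<forall>a b c. bounded (range a) \<longrightarrow> bounded (range b) \<longrightarrow>
        (\<forall>z\<in>ball 0 1. PhiK K \<nu> \<beta> (\<lambda>n. a n + c * b n) z
                       = PhiK K \<nu> \<beta> a z + c * PhiK K \<nu> \<beta> b z))
    \<and> (\<forall>a b. bounded (range a) \<longrightarrow> bounded (range b) \<longrightarrow>
        (\<forall>z\<in>ball 0 1. PhiK K \<nu> \<beta> a z = PhiK K \<nu> \<beta> b z) \<longrightarrow> a = b)
    \<and> (\<exists>c C. 0 < c \<and> 0 < C \<and> (\<forall>a. bounded (range a) \<longrightarrow>
        c * linf_norm a \<le> Hpia_norm p \<alpha> (PhiK K \<nu> \<beta> a)
        \<and> Hpia_norm p \<alpha> (PhiK K \<nu> \<beta> a) \<le> C * linf_norm a))"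
  proof (intro allI impI)
    fix K assume KK: "K0 < K"
    have K: "1 < K" using K0 KK by simp
    have k1: "\<eta> powr (-1/\<nu>) \<le> K" using KK unfolding K0_def by simp
    have k2: "\<eta> powr (1/(\<nu>+\<beta>)) \<le> K" using KK unfolding K0_def by simp
    have "K powr (-\<nu>) \<le> (\<eta> powr (-1/\<nu>)) powr (-\<nu>)"
      by (rule powr_mono2') (use nu k1 eta in auto)
    also have "\<dots> = \<eta>" using nu eta by (simp add: powr_powr)
    finally have q1: "K powr (-\<nu>) \<le> 3 powr \<beta> / 16" unfolding \<eta>_def .
    have "K powr (\<nu>+\<beta>) \<le> (\<eta> powr (1/(\<nu>+\<beta>))) powr (\<nu>+\<beta>)"
      by (rule powr_mono2') (use ga k2 eta in auto)
    also have "\<dots> = \<eta>" using ga eta by (simp add: powr_powr)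
    finally have q2: "K powr (\<nu>+\<beta>) \<le> 3 powr \<beta> / 16" unfolding \<eta>_def .
    show "(\<forall>a. bounded (range a) \<longrightarrow>
        (\<forall>z\<in>ball 0 1. summable (\<lambda>k. a k * fK K \<nu> \<beta> (Suc k) z))
      \<and> in_Hpia p \<alpha> (PhiK K \<nu> \<beta> a))
    \<and> (\<forall>a b c. bounded (range a) \<longrightarrow> bounded (range b) \<longrightarrow>
        (\<forall>z\<in>ball 0 1. PhiK K \<nu> \<beta> (\<lambda>n. a n + c * b n) z
                       = PhiK K \<nu> \<beta> a z + c * PhiK K \<nu> \<beta> b z))
    \<and> (\<forall>a b. bounded (range a) \<longrightarrow> bounded (range b) \<longrightarrow>
        (\<forall>z\<in>ball 0 1. PhiK K \<nu> \<beta> a z = PhiK K \<nu> \<beta> b z) \<longrightarrow> a = b)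
    \<and> (\<exists>c C. 0 < c \<and> 0 < C \<and> (\<forall>a. bounded (range a) \<longrightarrow>
        c * linf_norm a \<le> Hpia_norm p \<alpha> (PhiK K \<nu> \<beta> a)
        \<and> Hpia_norm p \<alpha> (PhiK K \<nu> \<beta> a) \<le> C * linf_norm a))"
      by (rule main_K[OF p al bp nudef nu K q1 q2])
  qed
  thus ?thesis using K0 by blast
qed

end
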